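(* Consider the following model. Let $\pi_0\in(0,1)$ and $\sigma\in(0,0.25]$. Let $\psi:[0,1]\to\mathbb{R}$ be non-decreasing with $\psi(0)<\psi(1)$. Define $$\pi_1(1)=\frac{(1+4\sigma)\pi_0}{1+4\sigma\pi_0},\qquad \pi_1(0)=\frac{(1-4\sigma)\pi_0}{1-4\sigma\pi_0},$$ $$\Psi(\sigma,\pi_0)=(0.5+2\sigma\pi_0)\,\psi(\pi_1(1))+(0.5-2\sigma\pi_0)\,\psi(\pi_1(0)),$$ $\Phi(S,\sigma,\pi_0)=0.5+\psi(\pi_0)$ and $\Phi(C,\sigma,\pi_0)=0.5+2\sigma\pi_0+\Psi(\sigma,\pi_0)$. The expert chooses the complex rule $C$ if $\Phi(C,\sigma,\pi_0)\ge\Phi(S,\sigma,\pi_0)$ and the simple rule $S$ otherwise. If $\psi$ is linear or convex, then the expert chooses the complex rule.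
   Context: Interpretation: $\pi_0$ is the common prior probability that the expert is competent; $\pi_1(Y)$ is the posterior after the complex rule leads to the correct ($Y=1$) or incorrect ($Y=0$) action, where $\Pr(Y=1)=0.5+2\sigma\pi_0$ under the complex rule; under the simple rule the posterior is $\pi_0$ and the probability of the correct action is $0.5$. $\psi$ is the expert's reputation payoff as a function of the posterior; $\Phi(r,\sigma,\pi_0)$ is the expected total (accuracy plus reputation) payoff from rule $r$. *)

theory Defs
  imports "HOL-Analysis.Analysis"
begin

text \<open>Posterior after complex rule gives correct (Y=1) or incorrect (Y=0) action.\<close>
definition pi1 :: "real \<Rightarrow> real \<Rightarrow> bool \<Rightarrow> real" where
  "pi1 \<sigma> \<pi>0 y = (if y then (1 + 4*\<sigma>) * \<pi>0 / (1 + 4*\<sigma>*\<pi>0)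
                          else (1 - 4*\<sigma>) * \<pi>0 / (1 - 4*\<sigma>*\<pi>0))"

definition Psi :: "(real \<Rightarrow> real) \<Rightarrow> real \<Rightarrow> real \<Rightarrow> real" where
  "Psi \<psi> \<sigma> \<pi>0 = (1/2 + 2*\<sigma>*\<pi>0) * \<psi> (pi1 \<sigma> \<pi>0 True)
                    + (1/2 - 2*\<sigma>*\<pi>0) * \<psi> (pi1 \<sigma> \<pi>0 False)"

datatype rule = S | C

definition Phi :: "(real \<Rightarrow> real) \<Rightarrow> rule \<Rightarrow> real \<Rightarrow> real \<Rightarrow> real" where
  "Phi \<psi> r \<sigma> \<pi>0 = (case r of
      S \<Rightarrow> 1/2 + \<psi> \<pi>0
    | C \<Rightarrow> 1/2 + 2*\<sigma>*\<pi>0 + Psi \<psi> \<sigma> \<pi>0)"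

definition choice :: "(real \<Rightarrow> real) \<Rightarrow> real \<Rightarrow> real \<Rightarrow> rule" where
  "choice \<psi> \<sigma> \<pi>0 = (if Phi \<psi> C \<sigma> \<pi>0 \<ge> Phi \<psi> S \<sigma> \<pi>0 then C else S)"

definition linear_on01 :: "(real \<Rightarrow> real) \<Rightarrow> bool" where
  "linear_on01 \<psi> \<longleftrightarrow> (\<exists>a b. \<forall>x\<in>{0..1}. \<psi> x = a * x + b)"

end

theory Submission
  imports Defs
begin

theorem corollary1:
  fixes \<psi> :: "real \<Rightarrow> real" and \<sigma> \<pi>0 :: real
  assumes "0 < \<pi>0" "\<pi>0 < 1"
    and "0 < \<sigma>" "\<sigma> \<le> 1/4"
    and "mono_on {0..1} \<psi>" and "\<psi> 0 < \<psi> 1"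
    and "linear_on01 \<psi> \<or> convex_on {0..1} \<psi>"
  shows "choice \<psi> \<sigma> \<pi>0 = C"
proof -
  define x where "x = (1 - 4*\<sigma>) * \<pi>0 / (1 - 4*\<sigma>*\<pi>0)"
  define y where "y = (1 + 4*\<sigma>) * \<pi>0 / (1 + 4*\<sigma>*\<pi>0)"
  define t where "t = 1/2 + 2*\<sigma>*\<pi>0"
  have d0: "1 - 4*\<sigma>*\<pi>0 > 0"
  proof -
    have "\<sigma>*\<pi>0 \<le> 1/4 * \<pi>0" using assms(1,4) by (intro mult_right_mono) auto
    also have "\<dots> < 1/4" using assms(2) by simp
    finally have "\<sigma>*\<pi>0 < 1/4" .
    thus ?thesis by simp
  qed
  have d1: "1 + 4*\<sigma>*\<pi>0 > 0" using assms by (simp add: add_pos_pos)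
  have x0: "0 \<le> x" unfolding x_def using d0 assms by simp
  have x1: "x \<le> 1" unfolding x_def using d0 assms
    by (simp add: divide_simps algebra_simps mult_left_le)
  have y0: "0 \<le> y" unfolding y_def using d1 assms by simp
  have y1: "y \<le> 1" unfolding y_def using d1 assms
    by (simp add: divide_simps algebra_simps mult_left_le)
  have t0: "0 \<le> t" "t \<le> 1" unfolding t_def using d0 d1 by auto
  have comb: "(1 - t) * x + t * y = \<pi>0"
  proof -
    have aux: "\<And>d a::real. d \<noteq> 0 \<Longrightarrow> (d/2)*(a/d) = a/2" by simp
    have "1 - t = (1 - 4*\<sigma>*\<pi>0) / 2" unfolding t_def by simp
    hence "(1 - t) * x = ((1 - 4*\<sigma>*\<pi>0) / 2) * ((1 - 4*\<sigma>) * \<pi>0 / (1 - 4*\<sigma>*\<pi>0))"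
      unfolding x_def by (simp only:)
    also have "\<dots> = (1 - 4*\<sigma>) * \<pi>0 / 2" using d0 by (intro aux) simp
    finally have A: "(1 - t) * x = (1 - 4*\<sigma>) * \<pi>0 / 2" .
    have "t = (1 + 4*\<sigma>*\<pi>0) / 2" unfolding t_def by simp
    hence "t * y = ((1 + 4*\<sigma>*\<pi>0) / 2) * ((1 + 4*\<sigma>) * \<pi>0 / (1 + 4*\<sigma>*\<pi>0))"
      unfolding y_def by (simp only:)
    also have "\<dots> = (1 + 4*\<sigma>) * \<pi>0 / 2" using d1 by (intro aux) simp
    finally have B: "t * y = (1 + 4*\<sigma>) * \<pi>0 / 2" .
    from A B show ?thesis by (simp add: algebra_simps)
  qed
  have conv: "\<psi> \<pi>0 \<le> (1 - t) * \<psi> x + t * \<psi> y"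
    using assms(7)
  proof
    assume "linear_on01 \<psi>"
    then obtain a b where ab: "\<forall>z\<in>{0..1}. \<psi> z = a * z + b" unfolding linear_on01_def by blast
    have "\<psi> \<pi>0 = a * \<pi>0 + b" using ab assms(1,2) by simp
    also have "\<dots> = (1 - t) * (a*x+b) + t * (a*y+b)" unfolding comb[symmetric] by (simp add: algebra_simps)
    also have "\<dots> = (1 - t) * \<psi> x + t * \<psi> y" using ab x0 x1 y0 y1 by simp
    finally show ?thesis by simp
  next
    assume "convex_on {0..1} \<psi>"
    from convex_onD[OF this t0, of x y] x0 x1 y0 y1 have "\<psi> ((1 - t) * x + t * y) \<le> (1 - t) * \<psi> x + t * \<psi> y" by simp
    thus ?thesis unfolding comb .
  qed
  have "Psi \<psi> \<sigma> \<pi>0 = (1 - t) * \<psi> x + t * \<psi> y"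
    unfolding Psi_def pi1_def x_def y_def t_def by simp
  hence "Phi \<psi> C \<sigma> \<pi>0 \<ge> Phi \<psi> S \<sigma> \<pi>0"
    unfolding Phi_def using conv mult_pos_pos[OF assms(3,1)] by simp
  thus ?thesis unfolding choice_def by simp
qed

end
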